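(* Let $\mathcal{C}$ be the code described in the context and let $1\le B'\le B$. Suppose the erasure pattern consists of a single burst, i.e. the erased positions are exactly $s,s+1,\ldots,s+B'-1$ for some $1\le s\le n-B'+1$, and there are no other erasures. Assume that either $r=0$ (i.e. $B$ divides $k$), or $r>0$ and $B'\le N+r$. Then every erased information symbol $u_i$ ($1\le i\le k$) can be decoded with maximum delay $T$, i.e. it can be recovered from $(y_1,\ldots,y_{i+\min\{T,n-i\}})$; in fact each erased $u_i$ can be recovered from the interleaved parity check $p_{N+j}$, where $j\in\{1,\ldots,B\}$ with $j\equiv i\pmod B$.
   Context: Code construction. Fix integers $T\ge 1$, $N\ge 0$, $B\ge 1$ with $N+B\le T$ and $N<T$, and a finite field $\mathbb{F}_q$ with $q\ge T$. Set $k=T-N$ and $n=T+B$. Write $k=mB+r$ with $m=\lfloor k/B\rfloor$ and $0\le r<B$. The code $\mathcal{C}\subseteq\mathbb{F}_q^n$ is the linear systematic code whose codeword for the message $\mathbf{u}=(u_1,\ldots,u_k)$ is $\mathbf{x}=(u_1,\ldots,u_k,p_1,\ldots,p_{N+B})$ (so $u_i$ is at position $i$ and $p_j$ at position $k+j$), where: (i) $p_1,\ldots,p_N$ are linear functions of $\mathbf{u}$ such that the length-$(k+N)$ code $\{(u_1,\ldots,u_k,p_1,\ldots,p_N)\}$ is a systematic MDS (e.g. Cauchy-based Reed–Solomon) $(k+N,k)$ code over $\mathbb{F}_q$; (ii) for $i=1,\ldots,B$, the interleaved parity check is $p_{N+i}=\sum_{\ell=0}^{m-1}u_{i+\ell B}+\mathbb{1}_{\{i\le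 r\}}\,u_{mB+i}$, i.e. $p_{N+i}$ is the sum of all $u_j$, $1\le j\le k$, with $j\equiv i \pmod B$. Decoding with delay. Given an erasure pattern $\boldsymbol{\varepsilon}\in\{0,1\}^n$ ($\varepsilon_j=1$ meaning $x_j$ is erased), the received word is $\mathbf{y}=(y_1,\ldots,y_n)$ with $y_j=x_j$ if $\varepsilon_j=0$ and $y_j=\star$ otherwise. A symbol $x_i$ can be recovered from $(y_1,\ldots,y_j)$ if for every two codewords $\mathbf{x},\mathbf{x}'\in\mathcal{C}$ that agree on all positions $\ell\le j$ with $\varepsilon_\ell=0$, one has $x_i=x'_i$; it is decoded with maximum delay $T$ if it can be recovered from $(y_1,\ldots,y_{i+\min\{T,n-i\}})$. *)

theory Defs
  imports Main
begin

text \<open>Parameters: T, N, B with k = T - N, n = T + B, m = k div B, r = k mod B.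
  Messages are functions u :: nat \<Rightarrow> 'a (only u 1, ..., u k matter);
  codewords are functions x :: nat \<Rightarrow> 'a with positions 1..n (value 0 elsewhere).\<close>

definition kk :: "nat \<Rightarrow> nat \<Rightarrow> nat" where "kk T N = T - N"
definition nn :: "nat \<Rightarrow> nat \<Rightarrow> nat" where "nn T B = T + B"

definition mds_parity :: "nat \<Rightarrow> nat \<Rightarrow> (nat \<Rightarrow> nat \<Rightarrow> 'a::field) \<Rightarrow> (nat \<Rightarrow> 'a) \<Rightarrow> nat \<Rightarrow> 'a" where
  "mds_parity k N P u j = (\<Sum>i\<in>{1..k}. P j i * u i)"

definition interleaved_parity :: "nat \<Rightarrow> nat \<Rightarrow> (nat \<Rightarrow> 'a::field) \<Rightarrow> nat \<Rightarrow> 'a" where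
  "interleaved_parity k B u i =
     (\<Sum>l<k div B. u (i + l * B)) + (if i \<le> k mod B then u ((k div B) * B + i) else 0)"

definition sys_mds_word :: "nat \<Rightarrow> nat \<Rightarrow> (nat \<Rightarrow> nat \<Rightarrow> 'a::field) \<Rightarrow> (nat \<Rightarrow> 'a) \<Rightarrow> nat \<Rightarrow> 'a" where
  "sys_mds_word k N P u j =
     (if 1 \<le> j \<and> j \<le> k then u j
      else if k < j \<and> j \<le> k + N then mds_parity k N P u (j - k)
      else 0)"

text \<open>MDS: every nonzero codeword of the linear (k+N,k) code has Hamming weight at least
  (k+N) - k + 1 = N + 1 (minimum distance N+1).\<close>
definition is_mds :: "nat \<Rightarrow> nat \<Rightarrow> (nat \<Rightarrow> nat \<Rightarrow> 'a::field) \<Rightarrow> bool" where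
  "is_mds k N P \<longleftrightarrow>
     (\<forall>u. (\<exists>i\<in>{1..k}. u i \<noteq> 0) \<longrightarrow>
        N + 1 \<le> card {j\<in>{1..k+N}. sys_mds_word k N P u j \<noteq> 0})"

definition encode :: "nat \<Rightarrow> nat \<Rightarrow> nat \<Rightarrow> (nat \<Rightarrow> nat \<Rightarrow> 'a::field) \<Rightarrow> (nat \<Rightarrow> 'a) \<Rightarrow> nat \<Rightarrow> 'a" where
  "encode T N B P u j =
     (let k = kk T N in
      if 1 \<le> j \<and> j \<le> k then u j
      else if k < j \<and> j \<le> k + N then mds_parity k N P u (j - k)
      else if k + N < j \<and> j \<le> nn T B then interleaved_parity k B u (j - k - N)
      else 0)"

definition code :: "nat \<Rightarrow> nat \<Rightarrow> nat \<Rightarrow> (nat \<Rightarrow> nat \<Rightarrow> 'a::field) \<Rightarrow> (nat \<Rightarrow> 'a) set" where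
  "code T N B P = {x. \<exists>u. x = encode T N B P u}"

definition recoverable :: "(nat \<Rightarrow> 'a) set \<Rightarrow> nat set \<Rightarrow> nat \<Rightarrow> nat \<Rightarrow> bool" where
  "recoverable C E i j \<longleftrightarrow>
     (\<forall>x\<in>C. \<forall>x'\<in>C. (\<forall>l. 1 \<le> l \<and> l \<le> j \<and> l \<notin> E \<longrightarrow> x l = x' l) \<longrightarrow> x i = x' i)"

definition decodable_with_delay :: "(nat \<Rightarrow> 'a) set \<Rightarrow> nat \<Rightarrow> nat \<Rightarrow> nat set \<Rightarrow> nat \<Rightarrow> bool" where
  "decodable_with_delay C n T E i \<longleftrightarrow> recoverable C E i (i + min T (n - i))"

end

theory Submission
  imports Defs
begin

lemma ip_diff:
  "interleaved_parity k B (u::nat\<Rightarrow>'a::field) j - interleaved_parity k B u' j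
   = interleaved_parity k B (\<lambda>t. u t - u' t) j"
  unfolding interleaved_parity_def by (simp add: sum_subtractf)

lemma ip_single:
  fixes d :: "nat \<Rightarrow> 'a::field"
  assumes j: "1 \<le> j" "j \<le> B" and i: "i = q*B + j" "i \<le> k"
    and z: "\<And>t. t \<noteq> i \<Longrightarrow> 1 \<le> t \<Longrightarrow> t \<le> k \<Longrightarrow> t mod B = j mod B \<Longrightarrow> d t = 0"
  shows "interleaved_parity k B d j = d i"
proof -
  define m where "m = k div B"
  define r where "r = k mod B"
  have k: "k = m*B + r" by (simp add: m_def r_def)
  have rB: "r < B" using j by (simp add: r_def)
  have qm: "q < m \<or> (q = m \<and> j \<le> r)"
  proof (rule ccontr)
    assume "\<not> ?thesis"
    then have "m < q \<or> (q = m \<and> r < j)" by auto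
    then show False
    proof
      assume "m < q" then have "m*B + B \<le> q*B"
        by (metis add.commute mult_Suc mult_le_mono1 Suc_le_eq)
      then show False using i k rB by linarith
    next
      assume "q = m \<and> r < j" then show False using i k by simp
    qed
  qed
  have s1: "(\<Sum>l<m. d (j + l*B)) = (\<Sum>l<m. if l = q then d i else 0)"
  proof (rule sum.cong)
    fix l assume l: "l \<in> {..<m}"
    show "d (j + l*B) = (if l = q then d i else 0)"
    proof (cases "l = q")
      case True then show ?thesis using i by (simp add: add.commute)
    next
      case False
      have "j + l*B \<noteq> i" using False i j by simp
      moreover have "j + l*B \<le> k"
      proof -
        have "l*B + B \<le> m*B" using l
          by (metis lessThan_iff add.commute mult_Suc mult_le_mono1 Suc_le_eq)
        then show ?thesis using k j by linarith
      qed
      ultimately show ?thesis using z[of "j + l*B"] j False by simp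
    qed
  qed simp
  have s2: "(if j \<le> r then d (m*B + j) else 0) = (if j \<le> r \<and> q = m then d i else 0)"
  proof (cases "j \<le> r")
    case True
    show ?thesis
    proof (cases "q = m")
      case True then show ?thesis using i \<open>j \<le> r\<close> by simp
    next
      case False
      have "m*B + j \<noteq> i" using False i j by simp
      then show ?thesis using z[of "m*B+j"] j True False k by simp
    qed
  qed simp
  show ?thesis
    unfolding interleaved_parity_def m_def[symmetric] r_def[symmetric]
    using s1 s2 qm by auto
qed

lemma recov_mono:
  "recoverable C E i a \<Longrightarrow> a \<le> b \<Longrightarrow> recoverable C E i b"
  unfolding recoverable_def by (meson order_trans)

lemma same_mod_close:
  fixes a b B :: nat
  assumes "a mod B = b mod B" "a < b + B" "b < a + B"
  shows "a = b"
proof (cases "a \<le> b")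
  case True
  then have "B dvd b - a" using assms(1) mod_eq_dvd_iff_nat[of a b B] by simp
  moreover have "b - a < B" using assms by linarith
  ultimately show ?thesis using True by (metis diff_is_0_eq dvd_imp_le le_antisym not_less zero_less_diff)
next
  case False
  then have "B dvd a - b" using assms(1) mod_eq_dvd_iff_nat[of b a B] by simp
  moreover have "a - b < B" using assms by linarith
  ultimately show ?thesis using False by (metis diff_is_0_eq dvd_imp_le le_antisym not_less zero_less_diff)
qed

theorem mainTheorem3:
  fixes T N B B' s :: nat and P :: "nat \<Rightarrow> nat \<Rightarrow> 'a::{field,finite}"
  assumes "1 \<le> T" and "N + B \<le> T" and "N < T" and "1 \<le> B"
    and "card (UNIV :: 'a set) \<ge> T"
    and "is_mds (kk T N) N P"
    and "1 \<le> B'" and "B' \<le> B"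
    and "1 \<le> s" and "s \<le> nn T B - B' + 1"
    and "kk T N mod B = 0 \<or> (kk T N mod B > 0 \<and> B' \<le> N + kk T N mod B)"
  shows "\<forall>i\<in>{1..kk T N}. i \<in> {s..<s + B'} \<longrightarrow>
           decodable_with_delay (code T N B P) (nn T B) T {s..<s + B'} i
         \<and> (\<exists>j\<in>{1..B}. j mod B = i mod B
              \<and> recoverable (code T N B P) {s..<s + B'} i (kk T N + N + j))"
proof (intro ballI impI)
  fix i assume iK: "i \<in> {1..kk T N}" and iE: "i \<in> {s..<s + B'}"
  define k where "k = kk T N"
  define E where "E = {s..<s + B'}"
  define m where "m = k div B"
  define r where "r = k mod B"
  define j where "j = (i - 1) mod B + 1"
  define q where "q = (i - 1) div B"
  have kT: "k + N = T" using assms(3) by (simp add: k_def kk_def)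
  have kr: "k = m*B + r" by (simp add: m_def r_def)
  have rB: "r < B" using assms(4) by (simp add: r_def)
  have i1: "1 \<le> i" "i \<le> k" using iK by (auto simp: k_def)
  have j1: "1 \<le> j" "j \<le> B" using assms(4) by (auto simp: j_def Suc_le_eq)
  have iq: "i = q*B + j" using i1 unfolding q_def j_def
    by (metis add.commute add.left_commute div_mult_mod_eq le_add_diff_inverse2)
  have imod: "i mod B = j mod B" using iq by simp
  have jle: "j \<le> i" using iq by simp
  have qm: "q < m \<or> (q = m \<and> j \<le> r)"
  proof (rule ccontr)
    assume "\<not> ?thesis"
    then have "m < q \<or> (q = m \<and> r < j)" by auto
    then show False
    proof
      assume "m < q" then have "m*B + B \<le> q*B"
        by (metis add.commute mult_Suc mult_le_mono1 Suc_le_eq)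
      then show False using iq i1 kr rB by linarith
    next
      assume "q = m \<and> r < j" then show False using iq i1 kr by simp
    qed
  qed
  have pE: "k + N + j \<notin> E"
  proof -
    have "i + B' \<le> k + N + j"
      using qm
    proof
      assume "q < m" then have "q*B + B \<le> m*B"
        by (metis add.commute mult_Suc mult_le_mono1 Suc_le_eq)
      then show ?thesis using iq kr assms(8) by linarith
    next
      assume h: "q = m \<and> j \<le> r"
      then have "r > 0" using j1 by simp
      then have "B' \<le> N + r" using assms(11) by (simp add: k_def[symmetric] r_def)
      then show ?thesis using h iq kr by simp
    qed
    then show ?thesis using iE by (auto simp: E_def)
  qed
  have enc_u: "encode T N B P u t = u t" if "1 \<le> t" "t \<le> k" for u t
    using that by (simp add: encode_def k_def Let_def)
  have enc_p: "encode T N B P u (k + N + j) = interleaved_parity k B u j" for u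
    using j1 kT by (simp add: encode_def k_def[symmetric] Let_def nn_def)
  have rec: "recoverable (code T N B P) E i (k + N + j)"
    unfolding recoverable_def
  proof (intro ballI impI)
    fix x x' assume x: "x \<in> code T N B P" and x': "x' \<in> code T N B P"
      and agree: "\<forall>l. 1 \<le> l \<and> l \<le> k + N + j \<and> l \<notin> E \<longrightarrow> x l = x' l"
    obtain u where u: "x = encode T N B P u" using x by (auto simp: code_def)
    obtain u' where u': "x' = encode T N B P u'" using x' by (auto simp: code_def)
    have "interleaved_parity k B u j = interleaved_parity k B u' j"
      using agree[rule_format, of "k+N+j"] pE j1 u u' enc_p by simp
    then have "interleaved_parity k B (\<lambda>t. u t - u' t) j = 0"
      using ip_diff[of k B u j u'] by simp
    moreover have "interleaved_parity k B (\<lambda>t. u t - u' t) j = u i - u' i"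
    proof (rule ip_single[OF j1 iq i1(2)])
      fix t assume t: "t \<noteq> i" "1 \<le> t" "t \<le> k" "t mod B = j mod B"
      have "t \<notin> E"
      proof
        assume "t \<in> E"
        then have "t < i + B" "i < t + B" using iE assms(8) by (auto simp: E_def)
        then show False using same_mod_close[of t B i] t imod by simp
      qed
      then have "x t = x' t" using agree t by simp
      then show "u t - u' t = 0" using u u' enc_u t by simp
    qed
    ultimately show "x i = x' i" using u u' enc_u i1 by simp
  qed
  have bound: "k + N + j \<le> i + min T (nn T B - i)"
    using kT jle j1 i1 by (simp add: nn_def)
  show "decodable_with_delay (code T N B P) (nn T B) T {s..<s + B'} i
         \<and> (\<exists>j\<in>{1..B}. j mod B = i mod B
              \<and> recoverable (code T N B P) {s..<s + B'} i (kk T N + N + j))"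
    using rec bound j1 imod recov_mono[OF rec bound]
    by (auto simp: decodable_with_delay_def E_def k_def)
qed

end
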